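(* Let $p<q$ be positive integers and let $\alpha\in\{0,1,\dots,p-1\}$ or $\alpha>p-1$. Let $H^\circ_\alpha$ be the Hilbert space of functions on $\mathrm{B}_{p,q}$ with reproducing kernel $K_\alpha(z,u)=\det(1-zu^t)^{-\alpha}$. Then the subspace of $H^\circ_\alpha$ consisting of those functions which are (real-)analytic in some neighborhood of the closed ball $\overline{\mathrm{B}}_{p,q}$ is dense in $H^\circ_\alpha$.
   Context: $\mathrm{B}_{p,q}$ is the set of real $p\times q$ matrices of operator norm $<1$ (norm as operator between Euclidean spaces), and $\overline{\mathrm{B}}_{p,q}\subset\mathbb{R}^{pq}$ its closure (matrices of norm $\le 1$). For the stated $\alpha$ the kernel $K_\alpha(z,u)=\det(1-zu^t)^{-\alpha}$ on $\mathrm{B}_{p,q}\times \mathrm{B}_{p,q}$ is positive definite (Berezin), and $H^\circ_\alpha$ denotes the associated reproducing kernel Hilbert space: the completion of the span of the functions $z\mapsto K_\alpha(z,u)$, $u\in \mathrm{B}_{p,q}$, with $\langle K_\alpha(\cdot,u),K_\alpha(\cdot,w)\rangle=K_\alpha(w,u)$, realized as a space of (real-analytic) functions on $\mathrm{B}_{p,q}$ via $f(z)=\langle f,K_\alpha(\cdot,z)\rangle$. *)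

theory Defs
  imports "HOL-Analysis.Analysis"
begin

text \<open>Real p x q matrices are elements of type real^'q^'p (rows indexed by 'p,
  columns by 'q).  The operator norm is onorm of the linear map x |-> z *v x.\<close>

definition mball :: "(real^'q^'p) set" where
  "mball = {z. onorm (\<lambda>x. z *v x) < 1}"

definition mcball :: "(real^'q^'p) set" where
  "mcball = {z. onorm (\<lambda>x. z *v x) \<le> 1}"

definition Kker :: "real \<Rightarrow> real^'q^'p \<Rightarrow> real^'q^'p \<Rightarrow> real" where
  "Kker \<alpha> z u = det (mat 1 - z ** transpose u) powr (- \<alpha>)"

definition kfun :: "real \<Rightarrow> (real \<times> (real^'q^'p)) list \<Rightarrow> real^'q^'p \<Rightarrow> real" where
  "kfun \<alpha> cs z = (\<Sum>(a,u)\<leftarrow>cs. a * Kker \<alpha> z u)"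

text \<open>Squared Hilbert norm of such a combination:
  sum_{i,j} a_i a_j <K(.,u_i),K(.,u_j)> = sum_{i,j} a_i a_j K(u_j,u_i).\<close>
definition ksq :: "real \<Rightarrow> (real \<times> (real^'q^'p)) list \<Rightarrow> real" where
  "ksq \<alpha> cs = (\<Sum>(a,u)\<leftarrow>cs. \<Sum>(b,w)\<leftarrow>cs. a * b * Kker \<alpha> w u)"

definition kdiff :: "(real \<times> 'a) list \<Rightarrow> (real \<times> 'a) list \<Rightarrow> (real \<times> 'a) list" where
  "kdiff cs ds = cs @ map (\<lambda>(a,u). (- a, u)) ds"

text \<open>S is a Cauchy sequence (in the kernel norm) of combinations with centres in the
  open ball, converging pointwise on the ball to f; i.e. S represents the element f of the
  completion H_alpha, realized as a function on the ball.\<close>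
definition represents :: "real \<Rightarrow> (nat \<Rightarrow> (real \<times> (real^'q^'p)) list) \<Rightarrow> (real^'q^'p \<Rightarrow> real) \<Rightarrow> bool" where
  "represents \<alpha> S f \<longleftrightarrow>
     (\<forall>n. \<forall>(a,u)\<in>set (S n). u \<in> mball) \<and>
     (\<forall>e>0. \<exists>N. \<forall>m\<ge>N. \<forall>n\<ge>N. ksq \<alpha> (kdiff (S m) (S n)) < e) \<and>
     (\<forall>z\<in>mball. (\<lambda>n. kfun \<alpha> (S n) z) \<longlonglongrightarrow> f z)"

text \<open>Membership in H_alpha (only the values on the open ball matter).\<close>
definition inH :: "real \<Rightarrow> (real^'q^'p \<Rightarrow> real) \<Rightarrow> bool" where
  "inH \<alpha> f \<longleftrightarrow> (\<exists>S. represents \<alpha> S f)"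

text \<open>Real analyticity on an open set U of R^(pq): near every point a of U, f is the sum of
  an (unconditionally, hence absolutely) convergent multivariate power series in the
  pq matrix entries, with multi-indices m :: 'p x 'q => nat.\<close>
definition real_analytic_on :: "(real^'q^'p \<Rightarrow> real) \<Rightarrow> (real^'q^'p) set \<Rightarrow> bool" where
  "real_analytic_on f U \<longleftrightarrow>
     (\<forall>a\<in>U. \<exists>r>0. \<exists>c :: ('p \<times> 'q \<Rightarrow> nat) \<Rightarrow> real.
        \<forall>x\<in>ball a r. ((\<lambda>m. c m * (\<Prod>ij\<in>UNIV. (x $ fst ij $ snd ij - a $ fst ij $ snd ij) ^ m ij))
                        has_sum f x) UNIV)"

end

theory Submission
  imports Defs
begin


definition mon :: "('p \<times> 'q \<Rightarrow> nat) \<Rightarrow> real^'q^'p \<Rightarrow> real" where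
  "mon m x = (\<Prod>ij\<in>UNIV. (x $ fst ij $ snd ij) ^ m ij)"

definition polyfun :: "(real^'q^'p \<Rightarrow> real) \<Rightarrow> bool" where
  "polyfun g \<longleftrightarrow> (\<exists>L. \<forall>x. g x = (\<Sum>(c,m)\<leftarrow>L. c * mon m x))"

lemma mon_zero_idx[simp]: "mon (\<lambda>_. 0) x = 1"
  by (simp add: mon_def)

lemma mon_add: "mon (\<lambda>k. m k + n k) x = mon m x * mon n x"
  by (simp add: mon_def power_add prod.distrib)

lemma polyfun_const: "polyfun (\<lambda>x. k)"
  unfolding polyfun_def by (rule exI[of _ "[(k, \<lambda>_. 0)]"]) simp

lemma polyfun_coord: "polyfun (\<lambda>x::real^'q^'p. x $ i $ j)"
proof -
  have "mon (\<lambda>k::'p\<times>'q. if k = (i,j) then 1 else 0) x = x $ i $ j" for x :: "real^'q^'p"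
  proof -
    have "mon (\<lambda>k. if k = (i,j) then 1 else 0) x = (\<Prod>k\<in>UNIV. if k = (i,j) then x $ fst k $ snd k else 1)"
      unfolding mon_def by (rule prod.cong) auto
    also have "\<dots> = x $ i $ j" by (simp add: prod.delta)
    finally show ?thesis .
  qed
  then show ?thesis unfolding polyfun_def
    by (intro exI[of _ "[(1, \<lambda>k. if k = (i,j) then 1 else 0)]"]) simp
qed

lemma polyfun_add: "polyfun f \<Longrightarrow> polyfun g \<Longrightarrow> polyfun (\<lambda>x. f x + g x)"
proof -
  assume "polyfun f" "polyfun g"
  then obtain L1 L2 where f: "\<forall>x. f x = (\<Sum>(c,m)\<leftarrow>L1. c * mon m x)"
    and g: "\<forall>x. g x = (\<Sum>(c,m)\<leftarrow>L2. c * mon m x)" unfolding polyfun_def by blast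
  show ?thesis unfolding polyfun_def
    by (rule exI[of _ "L1 @ L2"]) (simp add: f g)
qed

lemma polyfun_sum_list: "(\<And>e. e \<in> set L \<Longrightarrow> polyfun (f e)) \<Longrightarrow> polyfun (\<lambda>x. \<Sum>e\<leftarrow>L. f e x)"
  by (induction L) (auto intro: polyfun_add polyfun_const)

lemma polyfun_mon_mult: "polyfun g \<Longrightarrow> polyfun (\<lambda>x. c * mon m x * g x)"
proof -
  assume "polyfun g"
  then obtain L2 where g: "\<forall>x. g x = (\<Sum>(c,m)\<leftarrow>L2. c * mon m x)" unfolding polyfun_def by blast
  have "(\<Sum>(d,n)\<leftarrow>map (\<lambda>(d,n). (c*d, \<lambda>k. m k + n k)) L2. d * mon n x) = c * mon m x * (\<Sum>(d,n)\<leftarrow>L2. d * mon n x)" for x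
    by (induction L2) (auto simp: mon_add algebra_simps)
  then show ?thesis unfolding polyfun_def using g
    by (intro exI[of _ "map (\<lambda>(d,n). (c*d, \<lambda>k. m k + n k)) L2"]) simp
qed

lemma polyfun_mult: "polyfun f \<Longrightarrow> polyfun g \<Longrightarrow> polyfun (\<lambda>x. f x * g x)"
proof -
  assume "polyfun f" "polyfun g"
  then obtain L1 where f: "\<forall>x. f x = (\<Sum>(c,m)\<leftarrow>L1. c * mon m x)" unfolding polyfun_def by blast
  have "polyfun (\<lambda>x. \<Sum>e\<leftarrow>L1. (case e of (c,m) \<Rightarrow> c * mon m x * g x))"
    by (rule polyfun_sum_list) (auto intro: polyfun_mon_mult[OF \<open>polyfun g\<close>])
  moreover have "(\<Sum>e\<leftarrow>L1. (case e of (c,m) \<Rightarrow> c * mon m x * g x)) = f x * g x" for x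
    unfolding f[rule_format] by (induction L1) (auto simp: algebra_simps)
  ultimately show ?thesis by simp
qed

lemma polyfun_sum: "finite S \<Longrightarrow> (\<And>s. s \<in> S \<Longrightarrow> polyfun (f s)) \<Longrightarrow> polyfun (\<lambda>x. \<Sum>s\<in>S. f s x)"
  by (induction S rule: finite_induct) (auto intro: polyfun_add polyfun_const)

lemma polyfun_prod: "finite S \<Longrightarrow> (\<And>s. s \<in> S \<Longrightarrow> polyfun (f s)) \<Longrightarrow> polyfun (\<lambda>x. \<Prod>s\<in>S. f s x)"
  by (induction S rule: finite_induct) (auto intro: polyfun_mult polyfun_const)

lemma polyfun_pow: "polyfun f \<Longrightarrow> polyfun (\<lambda>x. f x ^ n)"
  by (induction n) (auto intro: polyfun_mult polyfun_const)

lemma polyfun_shift: "polyfun g \<Longrightarrow> polyfun (\<lambda>x. g (x + a))"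
proof -
  assume "polyfun g"
  then obtain L where g: "\<forall>x. g x = (\<Sum>(c,m)\<leftarrow>L. c * mon m x)" unfolding polyfun_def by blast
  have "polyfun (\<lambda>x. \<Sum>e\<leftarrow>L. (case e of (c,m) \<Rightarrow> c * mon m (x + a)))"
  proof (rule polyfun_sum_list)
    fix e assume "e \<in> set L"
    obtain c m where e: "e = (c,m)" by force
    have "polyfun (\<lambda>x. c * mon m (x + a))"
      unfolding mon_def
      by (auto intro!: polyfun_mult polyfun_const polyfun_prod polyfun_pow polyfun_add polyfun_coord)
    then show "polyfun (\<lambda>x. case e of (c,m) \<Rightarrow> c * mon m (x + a))" by (simp add: e)
  qed
  moreover have "(\<lambda>x. g (x + a)) = (\<lambda>x. \<Sum>e\<leftarrow>L. (case e of (c,m) \<Rightarrow> c * mon m (x + a)))"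
    using g by (auto simp: split_def)
  ultimately show ?thesis by simp
qed

lemma polyfun_entry: "polyfun (\<lambda>x::real^'q^'p. (mat 1 - x ** transpose (u::real^'q^'p)) $ i $ k)"
proof -
  have e: "(mat 1 - x ** transpose u) $ i $ k = (if i = k then 1 else 0) + (\<Sum>j\<in>UNIV. (- u $ k $ j) * x $ i $ j)"
    for x :: "real^'q^'p"
    by (simp add: matrix_matrix_mult_def transpose_def mat_def sum_negf mult.commute)
  show ?thesis unfolding e
    by (intro polyfun_add polyfun_const polyfun_sum polyfun_mult polyfun_coord) auto
qed

lemma polyfun_det: "polyfun (\<lambda>x::real^'q^'p. det (mat 1 - x ** transpose (u::real^'q^'p)))"
  unfolding det_def
  by (intro polyfun_sum polyfun_mult polyfun_const polyfun_prod polyfun_entry) auto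

lemma continuous_mon: "continuous_on UNIV (mon m)"
  unfolding mon_def by (intro continuous_intros)

lemma continuous_polyfun: "polyfun g \<Longrightarrow> continuous_on UNIV g"
proof -
  assume "polyfun g"
  then obtain L where g: "\<forall>x. g x = (\<Sum>(c,m)\<leftarrow>L. c * mon m x)" unfolding polyfun_def by blast
  have "continuous_on UNIV (\<lambda>x. \<Sum>(c,m)\<leftarrow>L. c * mon m x)"
    by (induction L) (auto intro!: continuous_intros continuous_mon[THEN continuous_on_compose2] simp: split_def)
  moreover have "g = (\<lambda>x. \<Sum>(c,m)\<leftarrow>L. c * mon m x)" using g by auto
  ultimately show ?thesis by simp
qed



lemma has_sum_group:
  fixes F :: "'a \<Rightarrow> real"
  assumes "(F has_sum V) W" "\<And>i. (F has_sum G i) {w\<in>W. g w = i}"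
  shows "(G has_sum V) UNIV"
proof -
  have inj: "inj_on (\<lambda>w. (g w, w)) W" by (auto simp: inj_on_def)
  have im: "(\<lambda>w. (g w, w)) ` W = Sigma UNIV (\<lambda>i. {w\<in>W. g w = i})" by auto
  have "((\<lambda>p. F (snd p)) has_sum V) ((\<lambda>w. (g w, w)) ` W)"
    using has_sum_reindex[OF inj, of "\<lambda>p. F (snd p)" V] assms(1) by (simp add: o_def)
  then have "((\<lambda>p. F (snd p)) has_sum V) (Sigma UNIV (\<lambda>i. {w\<in>W. g w = i}))" by (simp add: im)
  then show ?thesis
    by (rule has_sum_SigmaD) (use assms(2) in simp)
qed

definition wlen :: "nat \<Rightarrow> nat \<Rightarrow> nat list set" where
  "wlen k n = {w. set w \<subseteq> {..<k} \<and> length w = n}"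

lemma wlen_finite: "finite (wlen k n)"
proof -
  have "wlen k n \<subseteq> {w. set w \<subseteq> {..<k} \<and> length w = n}" by (simp add: wlen_def)
  then show ?thesis using finite_lists_length_eq[of "{..<k}" n] by (simp add: wlen_def)
qed

lemma wlen_Suc: "wlen k (Suc n) = (\<lambda>(j,w). j # w) ` ({..<k} \<times> wlen k n)"
proof -
  have "w \<in> (\<lambda>(j,w). j # w) ` ({..<k} \<times> wlen k n)" if "w \<in> wlen k (Suc n)" for w
  proof -
    from that obtain j v where "w = j # v" unfolding wlen_def by (cases w) auto
    then show ?thesis using that unfolding wlen_def by force
  qed
  then show ?thesis unfolding wlen_def by auto
qed

lemma wlen_sum_pow: "(\<Sum>w\<in>wlen k n. \<Prod>j\<leftarrow>w. (f j::real)) = (\<Sum>j<k. f j) ^ n"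
proof (induction n)
  case 0
  have "wlen k 0 = {[]}" by (auto simp: wlen_def)
  then show ?case by simp
next
  case (Suc n)
  have inj: "inj_on (\<lambda>(j,w). j # w) ({..<k} \<times> wlen k n)" by (auto simp: inj_on_def)
  have "(\<Sum>w\<in>wlen k (Suc n). \<Prod>j\<leftarrow>w. f j) = (\<Sum>p\<in>{..<k} \<times> wlen k n. f (fst p) * (\<Prod>j\<leftarrow>snd p. f j))"
    unfolding wlen_Suc sum.reindex[OF inj] by (simp add: case_prod_unfold)
  also have "\<dots> = (\<Sum>j<k. \<Sum>w\<in>wlen k n. f j * (\<Prod>j\<leftarrow>w. f j))"
    by (simp add: sum.cartesian_product case_prod_unfold)
  also have "\<dots> = (\<Sum>j<k. f j) * (\<Sum>w\<in>wlen k n. \<Prod>j\<leftarrow>w. f j)"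
    by (rule sum_product[symmetric])
  finally show ?case using Suc by simp
qed

lemma det_ne0:
  fixes x u :: "real^'q^'p"
  assumes x: "\<And>v. norm (x *v v) \<le> norm v" and u: "onorm (\<lambda>v. u *v v) < 1"
  shows "det (mat 1 - x ** transpose u) \<noteq> 0"
proof -
  have "v = 0" if v: "(mat 1 - x ** transpose u) *v v = 0" for v
  proof -
    define w where "w = transpose u *v v"
    have vw: "v = x *v w" using v
      by (simp add: w_def matrix_vector_mult_diff_rdistrib matrix_vector_mul_assoc del: transpose_matrix_vector)
    have nv: "norm v \<le> norm w" using x vw by simp
    have "norm w ^ 2 = inner w w" by (simp add: power2_norm_eq_inner)
    also have "inner w w = inner v (u *v w)" unfolding w_def
      by (simp add: dot_lmul_matrix)
    also have "\<dots> \<le> norm v * norm (u *v w)" by (rule norm_cauchy_schwarz)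
    also have "\<dots> \<le> norm v * (onorm (\<lambda>v. u *v v) * norm w)"
      by (intro mult_left_mono onorm) auto
    also have "\<dots> \<le> norm w * (onorm (\<lambda>v. u *v v) * norm w)"
      by (intro mult_right_mono nv) (auto intro!: mult_nonneg_nonneg onorm_pos_le)
    finally have "norm w ^ 2 \<le> norm w * (onorm (\<lambda>v. u *v v) * norm w)" .
    then have "norm w ^ 2 \<le> onorm (\<lambda>v. u *v v) * norm w ^ 2" by (simp add: power2_eq_square mult_ac)
    then have "norm w = 0" using u
      by (metis mult_le_cancel_right1 norm_ge_zero not_less power_eq_0_iff zero_less_power2 mult.commute)
    then show "v = 0" using nv by simp
  qed
  then have "invertible (mat 1 - x ** transpose u)"
    by (simp add: invertible_left_inverse matrix_left_invertible_ker)
  then show ?thesis by (simp add: invertible_det_nz)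
qed

lemma det_pos:
  fixes z u :: "real^'q^'p"
  assumes z: "onorm (\<lambda>v. z *v v) \<le> 1" and u: "onorm (\<lambda>v. u *v v) < 1"
  shows "det (mat 1 - z ** transpose u) > 0"
proof (rule ccontr)
  define P where "P = (\<lambda>t::real. det (mat 1 - (t *\<^sub>R z) ** transpose u))"
  assume "\<not> ?thesis"
  then have P1: "P 1 \<le> 0" by (simp add: P_def)
  have P0: "P 0 \<ge> 0" by (simp add: P_def)
  have cont: "continuous_on {0..1} P"
  proof -
    have "continuous_on UNIV (\<lambda>x::real^'q^'p. det (mat 1 - x ** transpose u))"
      by (rule continuous_polyfun[OF polyfun_det])
    then have "continuous_on UNIV (\<lambda>t::real. det (mat 1 - (t *\<^sub>R z) ** transpose u))"
      by (rule continuous_on_compose2) (auto intro!: continuous_intros)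
    then show ?thesis unfolding P_def by (rule continuous_on_subset) auto
  qed
  obtain t where t: "t \<in> {0..1}" "P t = 0"
    using IVT2'[of P 1 0 0, OF P1 P0] cont by auto
  have "\<And>v. norm ((t *\<^sub>R z) *v v) \<le> norm v"
  proof -
    fix v
    have "norm ((t *\<^sub>R z) *v v) = \<bar>t\<bar> * norm (z *v v)"
      by (simp add: scaleR_matrix_vector_assoc[symmetric])
    also have "\<dots> \<le> 1 * (onorm (\<lambda>v. z *v v) * norm v)"
      using t(1) by (intro mult_mono onorm) auto
    also have "\<dots> \<le> norm v" using z mult_right_mono[of "onorm (\<lambda>v. z *v v)" 1 "norm v"] by simp
    finally show "norm ((t *\<^sub>R z) *v v) \<le> norm v" .
  qed
  from det_ne0[OF this u] t(2) show False by (simp add: P_def)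
qed



lemma mon_at0: "mon m (0::real^'q^'p) = (if m = (\<lambda>_. 0) then 1 else 0)"
proof (cases "m = (\<lambda>_. 0)")
  case False
  then obtain ij where "m ij \<noteq> 0" by (metis (mono_tags) ext)
  have h: "(0::real^'q^'p) $ fst ij $ snd ij ^ m ij = 0" using \<open>m ij \<noteq> 0\<close> by simp
  have "mon m (0::real^'q^'p) = 0" unfolding mon_def prod_zero_iff[OF finite_class.finite_UNIV]
    using h by blast
  then show ?thesis using False by simp
qed (simp add: mon_def)

lemma sum_list_nth: "(\<Sum>e\<leftarrow>L. f e) = (\<Sum>j<length L. f (L!j))"
  by (induction L) (simp_all add: sum.lessThan_Suc_shift del: sum.lessThan_Suc)

lemma mon_deg: "mon (\<lambda>ij. \<Sum>j\<leftarrow>w. mj j ij) y = (\<Prod>j\<leftarrow>w. mon (mj j) y)"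
proof (induction w)
  case Nil then show ?case by simp
next
  case (Cons a w) then show ?case
    using mon_add[of "mj a" "\<lambda>ij. \<Sum>j\<leftarrow>w. mj j ij" y] by simp
qed

lemma prod_list_mult: "(\<Prod>j\<leftarrow>w. (f j::real)) * (\<Prod>j\<leftarrow>w. g j) = (\<Prod>j\<leftarrow>w. f j * g j)"
proof (induction w)
  case Nil then show ?case by simp
next
  case (Cons a w)
  have "(\<Prod>j\<leftarrow>a#w. f j) * (\<Prod>j\<leftarrow>a#w. g j) = (f a * g a) * ((\<Prod>j\<leftarrow>w. f j) * (\<Prod>j\<leftarrow>w. g j))"
    by (simp add: mult_ac)
  then show ?case using Cons.IH by simp
qed

lemma prod_list_abs: "\<bar>\<Prod>j\<leftarrow>w. (f j::real)\<bar> = (\<Prod>j\<leftarrow>w. \<bar>f j\<bar>)"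
  by (induction w) (simp_all add: abs_mult)

lemma mon_abs_le:
  assumes "\<And>i j. \<bar>y $ i $ j\<bar> \<le> r"
  shows "\<bar>mon m y\<bar> \<le> mon m ((\<chi> i j. r)::real^'q^'p)"
  unfolding mon_def abs_prod
  by (intro prod_mono) (auto simp: power_abs intro!: power_mono assms)

lemma mon_R_nonneg: "0 \<le> r \<Longrightarrow> 0 \<le> mon m ((\<chi> i j. r)::real^'q^'p)"
  unfolding mon_def by (intro prod_nonneg) auto

lemma mon_R_pos: "0 < r \<Longrightarrow> 0 < mon m ((\<chi> i j. r)::real^'q^'p)"
  unfolding mon_def by (intro prod_pos) auto

lemma mon_R_le:
  assumes "0 \<le> r" "r \<le> 1" "m \<noteq> (\<lambda>_. 0)"
  shows "mon m ((\<chi> i j. r)::real^'q^'p) \<le> r"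
proof -
  obtain ij where ij: "m ij \<noteq> 0" using assms(3) by (metis (mono_tags) ext)
  have "mon m ((\<chi> i j. r)::real^'q^'p) = r ^ m ij * (\<Prod>k\<in>UNIV - {ij}. r ^ m k)"
    unfolding mon_def by (subst prod.remove[of _ ij]) auto
  also have "\<dots> \<le> r ^ m ij * 1"
    using assms by (intro mult_left_mono prod_le_1) (auto intro: power_le_one)
  also have "\<dots> \<le> r ^ 1" by (simp only: mult_1_right, rule power_decreasing) (use assms ij in auto)
  finally show ?thesis by simp
qed

lemma comp_le_norm: "\<bar>y $ i $ j\<bar> \<le> norm (y::real^'q^'p)"
proof -
  have "\<bar>y $ i $ j\<bar> \<le> norm (y $ i)" by (rule component_le_norm_cart)
  also have "norm (y $ i) \<le> norm y" by (rule Finite_Cartesian_Product.norm_nth_le)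
  finally show ?thesis .
qed

lemma powr_series:
  fixes P :: "real^'q^'p \<Rightarrow> real" and \<alpha> :: real
  assumes PP: "polyfun P" and Pa: "P a > 0"
  shows "\<exists>r>0. \<exists>c. \<forall>x\<in>ball a r. ((\<lambda>m. c m * mon m (x - a)) has_sum (P x powr (-\<alpha>))) UNIV"
proof -
  define D where "D = P a"
  have D: "D > 0" using Pa by (simp add: D_def)
  obtain L0 where L0: "\<forall>y. P (y + a) = (\<Sum>(c,m)\<leftarrow>L0. c * mon m y)"
    using polyfun_shift[OF PP, of a] unfolding polyfun_def by blast
  define L where "L = filter (\<lambda>(c,m). m \<noteq> (\<lambda>_. 0)) L0"
  have split: "(\<Sum>(c,m)\<leftarrow>L0. c * mon m y) = (\<Sum>(c,m)\<leftarrow>L0. c * mon m 0) + (\<Sum>(c,m)\<leftarrow>L. c * mon m y)" for y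
    unfolding L_def by (induction L0) (auto simp: mon_at0)
  define k where "k = length L"
  define cj where "cj j = fst (L ! j)" for j
  define mj where "mj j = snd (L ! j)" for j
  define Q where "Q y = (\<Sum>j<k. cj j * mon (mj j) y)" for y
  have PQ: "P (y + a) = D + Q y" for y
  proof -
    have "D = (\<Sum>(c,m)\<leftarrow>L0. c * mon m 0)"
      using L0[rule_format, of 0] by (simp add: D_def)
    moreover have "(\<Sum>(c,m)\<leftarrow>L. c * mon m y) = Q y"
      unfolding Q_def k_def cj_def mj_def by (simp add: sum_list_nth split_def)
    ultimately show ?thesis using L0 split[of y] by simp
  qed
  have mj_nz: "mj j \<noteq> (\<lambda>_. 0)" if "j < k" for j
  proof -
    have "L ! j \<in> set L" using that by (simp add: k_def)
    then show ?thesis unfolding mj_def L_def by auto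
  qed
  define C where "C = (\<Sum>j<k. \<bar>cj j\<bar>)"
  have C0: "C \<ge> 0" by (simp add: C_def sum_nonneg)
  define r where "r = min 1 (D / (2 * (C + 1)))"
  have r0: "r > 0" using D C0 by (simp add: r_def)
  have r1: "r \<le> 1" by (simp add: r_def)
  define R :: "real^'q^'p" where "R = (\<chi> i j. r)"
  define G where "G = (\<Sum>j<k. \<bar>cj j\<bar> * mon (mj j) R)"
  have G0: "G \<ge> 0" unfolding G_def R_def using r0 by (intro sum_nonneg mult_nonneg_nonneg mon_R_nonneg) auto
  have "G \<le> (\<Sum>j<k. \<bar>cj j\<bar> * r)" unfolding G_def R_def
    using r0 r1 mj_nz by (intro sum_mono mult_left_mono mon_R_le) auto
  also have "\<dots> = C * r" by (simp add: C_def sum_distrib_right)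
  also have "\<dots> \<le> C * (D / (2 * (C + 1)))" using C0 by (intro mult_left_mono) (auto simp: r_def)
  also have "\<dots> < D"
  proof -
    have "C * (D / (2 * (C + 1))) = D * (C / (2 * (C + 1)))" by simp
    also have "\<dots> < D * 1" using D C0 by (intro mult_strict_left_mono) (auto simp: field_simps)
    finally show ?thesis by simp
  qed
  finally have GD: "G < D" .
  define \<beta> where "\<beta> n = ((-\<alpha>) gchoose n) * D powr (-\<alpha> - real n)" for n
  define b where "b n = \<bar>\<beta> n\<bar> * G ^ n" for n
  have sb: "summable b"
  proof -
    define x where "x = (G + D) / 2"
    have "\<bar>x\<bar> < D" using G0 GD by (simp add: x_def)
    from gen_binomial_real'[OF this, of "-\<alpha>"]
    have "summable (\<lambda>n. \<beta> n * x ^ n)"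
      by (simp add: \<beta>_def sums_summable mult_ac)
    from powser_insidea[OF this, of G] have "summable (\<lambda>n. norm (\<beta> n * G ^ n))"
      using G0 GD by (simp add: x_def)
    then have "summable (\<lambda>n. \<bar>\<beta> n\<bar> * G ^ n)" by (simp add: abs_mult G0)
    moreover have "b = (\<lambda>n. \<bar>\<beta> n\<bar> * G ^ n)" by (rule ext) (simp add: b_def)
    ultimately show ?thesis by simp
  qed
  have b0: "b n \<ge> 0" for n by (simp add: b_def G0)
  define W where "W = {w. set w \<subseteq> {..<k}}"
  define coef where "coef w = \<beta> (length w) * (\<Prod>j\<leftarrow>w. cj j)" for w
  define deg where "deg w = (\<lambda>ij. \<Sum>j\<leftarrow>w. mj j ij)" for w
  define A where "A w = \<bar>coef w\<bar> * mon (deg w) R" for w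
  have A0: "A w \<ge> 0" for w unfolding A_def R_def using r0 by (intro mult_nonneg_nonneg mon_R_nonneg) auto
  have Aeq: "A w = \<bar>\<beta> (length w)\<bar> * (\<Prod>j\<leftarrow>w. \<bar>cj j\<bar> * mon (mj j) R)" for w
    unfolding A_def coef_def deg_def mon_deg abs_mult prod_list_abs
    by (simp add: prod_list_mult[symmetric] mult_ac)
  have Asum: "(\<Sum>w\<in>wlen k n. A w) = b n" for n
  proof -
    have "(\<Sum>w\<in>wlen k n. A w) = (\<Sum>w\<in>wlen k n. \<bar>\<beta> n\<bar> * (\<Prod>j\<leftarrow>w. \<bar>cj j\<bar> * mon (mj j) R))"
      by (intro sum.cong) (auto simp: Aeq wlen_def)
    also have "\<dots> = b n" by (simp add: sum_distrib_left[symmetric] wlen_sum_pow b_def G_def)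
    finally show ?thesis .
  qed
  have sA: "A summable_on W"
  proof (rule nonneg_bdd_above_summable_on)
    show "bdd_above (sum A ` {F. F \<subseteq> W \<and> finite F})"
    proof (rule bdd_aboveI2)
      fix F assume F: "F \<in> {F. F \<subseteq> W \<and> finite F}"
      have sub: "F \<subseteq> (\<Union>n\<in>length ` F. wlen k n)" using F by (auto simp: W_def wlen_def)
      have fin: "finite (\<Union>n\<in>length ` F. wlen k n)"
        by (rule finite_UN_I) (use F in \<open>simp_all add: wlen_finite\<close>)
      have "sum A F \<le> sum A (\<Union>n\<in>length ` F. wlen k n)"
        by (rule sum_mono2[OF fin sub]) (simp add: A0)
      also have "\<dots> = (\<Sum>n\<in>length ` F. sum A (wlen k n))"
        using F by (intro sum.UNION_disjoint) (simp_all add: wlen_finite, auto simp: wlen_def)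
      also have "\<dots> = (\<Sum>n\<in>length ` F. b n)" by (simp add: Asum)
      also have "\<dots> \<le> suminf b" using F by (intro sum_le_suminf sb) (auto simp: b0)
      finally show "sum A F \<le> suminf b" .
    qed
  qed (simp add: A0)
  define c where "c m = infsum coef {w\<in>W. deg w = m}" for m
  have "\<forall>x\<in>ball a r. ((\<lambda>m. c m * mon m (x - a)) has_sum (P x powr (-\<alpha>))) UNIV"
  proof
    fix x assume x: "x \<in> ball a r"
    define y where "y = x - a"
    have yr: "\<bar>y $ i $ j\<bar> \<le> r" for i j
      using comp_le_norm[of y i j] x by (simp add: y_def dist_norm norm_minus_commute)
    have monle: "\<bar>mon m y\<bar> \<le> mon m R" for m unfolding R_def by (rule mon_abs_le[OF yr])
    define F where "F w = coef w * mon (deg w) y" for w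
    have "(\<lambda>w. norm (F w)) summable_on W"
    proof (rule Infinite_Sum.abs_summable_on_comparison_test)
      show "(\<lambda>w. norm (A w)) summable_on W" using sA A0 by (simp add: abs_of_nonneg)
      fix w assume "w \<in> W"
      show "norm (F w) \<le> norm (A w)"
        using monle[of "deg w"] A0[of w] unfolding F_def A_def
        by (simp add: abs_mult mult_left_mono)
    qed
    then have sF: "F summable_on W" by (rule abs_summable_summable)
    define V where "V = infsum F W"
    have FV: "(F has_sum V) W" using sF by (simp add: V_def)
    have Qlt: "\<bar>Q y\<bar> < D"
    proof -
      have "\<bar>Q y\<bar> \<le> (\<Sum>j<k. \<bar>cj j * mon (mj j) y\<bar>)" unfolding Q_def by (rule sum_abs)
      also have "\<dots> \<le> G" unfolding G_def abs_mult by (intro sum_mono mult_left_mono monle) auto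
      finally show ?thesis using GD by simp
    qed
    have "((\<lambda>n. \<beta> n * Q y ^ n) has_sum V) UNIV"
    proof (rule has_sum_group[OF FV])
      fix n
      have fib: "{w\<in>W. length w = n} = wlen k n" by (auto simp: W_def wlen_def)
      have "sum F (wlen k n) = (\<Sum>w\<in>wlen k n. \<beta> n * (\<Prod>j\<leftarrow>w. cj j * mon (mj j) y))"
        by (intro sum.cong) (auto simp: F_def coef_def deg_def mon_deg wlen_def prod_list_mult[symmetric] mult_ac)
      also have "\<dots> = \<beta> n * Q y ^ n" by (simp add: sum_distrib_left[symmetric] wlen_sum_pow Q_def)
      finally show "(F has_sum \<beta> n * Q y ^ n) {w\<in>W. length w = n}"
        unfolding fib using has_sum_finite[OF wlen_finite, of F k n] by simp
    qed
    then have "(\<lambda>n. \<beta> n * Q y ^ n) sums V" by (rule has_sum_imp_sums)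
    moreover have "(\<lambda>n. \<beta> n * Q y ^ n) sums (Q y + D) powr (-\<alpha>)"
      using gen_binomial_real'[OF Qlt, of "-\<alpha>"] by (simp add: \<beta>_def mult_ac)
    ultimately have V: "V = P x powr (-\<alpha>)"
      using PQ[of y] sums_unique2 by (simp add: y_def add.commute)
    have "((\<lambda>m. c m * mon m y) has_sum V) UNIV"
    proof (rule has_sum_group[OF FV])
      fix m
      have "(\<lambda>w. \<bar>coef w\<bar> * mon m R) summable_on {w\<in>W. deg w = m}"
      proof -
        have f1: "(\<lambda>x. \<bar>coef x\<bar> * mon (deg x) R) summable_on {w\<in>W. deg w = m}"
        proof -
          have AA: "A = (\<lambda>x. \<bar>coef x\<bar> * mon (deg x) R)" by (rule ext) (simp add: A_def)
          have "A summable_on {w\<in>W. deg w = m}" by (rule summable_on_subset_banach[OF sA]) blast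
          then show ?thesis by (simp only: AA)
        qed
        have e: "\<And>x. x \<in> {w\<in>W. deg w = m} \<Longrightarrow> \<bar>coef x\<bar> * mon (deg x) R = \<bar>coef x\<bar> * mon m R"
          by simp
        show ?thesis by (rule iffD1[OF summable_on_cong[OF e] f1])
      qed
      note f2 = this
      have ne: "mon m R \<noteq> 0" using mon_R_pos[OF r0, of m] by (simp add: R_def)
      have s2: "(\<lambda>w. \<bar>coef w\<bar>) summable_on {w\<in>W. deg w = m}"
        by (rule iffD1[OF summable_on_cmult_left'[OF ne] f2])
      have s3: "coef summable_on {w\<in>W. deg w = m}"
        by (rule abs_summable_summable) (use s2 in \<open>simp only: real_norm_def\<close>)
      have hc: "(coef has_sum c m) {w\<in>W. deg w = m}" unfolding c_def by (rule has_sum_infsum[OF s3])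
      have h1: "((\<lambda>w. coef w * mon m y) has_sum c m * mon m y) {w\<in>W. deg w = m}"
        by (rule has_sum_cmult_left[OF hc])
      have e2: "\<And>w. w \<in> {w\<in>W. deg w = m} \<Longrightarrow> coef w * mon m y = F w"
        by (simp add: F_def)
      show "(F has_sum c m * mon m y) {w\<in>W. deg w = m}" by (rule iffD1[OF has_sum_cong[OF e2] h1])
    qed
    then show "((\<lambda>m. c m * mon m (x - a)) has_sum (P x powr (-\<alpha>))) UNIV"
      by (simp add: V y_def)
  qed
  then show ?thesis using r0 by blast
qed



definition loc :: "(real^'q^'p \<Rightarrow> real) \<Rightarrow> real^'q^'p \<Rightarrow> bool" where
  "loc f a \<longleftrightarrow> (\<exists>r>0. \<exists>c. \<forall>x\<in>ball a r. ((\<lambda>m. c m * mon m (x - a)) has_sum f x) UNIV)"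

lemma loc_zero: "loc (\<lambda>_. 0) a"
  unfolding loc_def by (rule exI[of _ 1]) (auto intro!: exI[of _ "\<lambda>_. 0"])

lemma loc_add: assumes "loc f a" "loc g a" shows "loc (\<lambda>x. f x + g x) a"
proof -
  obtain r1 c1 where 1: "r1 > 0" "\<forall>x\<in>ball a r1. ((\<lambda>m. c1 m * mon m (x - a)) has_sum f x) UNIV"
    using assms(1) unfolding loc_def by blast
  obtain r2 c2 where 2: "r2 > 0" "\<forall>x\<in>ball a r2. ((\<lambda>m. c2 m * mon m (x - a)) has_sum g x) UNIV"
    using assms(2) unfolding loc_def by blast
  have "\<forall>x\<in>ball a (min r1 r2). ((\<lambda>m. (c1 m + c2 m) * mon m (x - a)) has_sum (f x + g x)) UNIV"
  proof
    fix x assume "x \<in> ball a (min r1 r2)"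
    then have "((\<lambda>m. c1 m * mon m (x - a) + c2 m * mon m (x - a)) has_sum (f x + g x)) UNIV"
      using 1 2 by (intro has_sum_add) auto
    then show "((\<lambda>m. (c1 m + c2 m) * mon m (x - a)) has_sum (f x + g x)) UNIV"
      by (simp add: distrib_right)
  qed
  then show ?thesis unfolding loc_def using 1 2 by (intro exI[of _ "min r1 r2"]) auto
qed

lemma loc_cmult: assumes "loc f a" shows "loc (\<lambda>x. b * f x) a"
proof -
  obtain r c where 1: "r > 0" "\<forall>x\<in>ball a r. ((\<lambda>m. c m * mon m (x - a)) has_sum f x) UNIV"
    using assms(1) unfolding loc_def by blast
  have "\<forall>x\<in>ball a r. ((\<lambda>m. (b * c m) * mon m (x - a)) has_sum (b * f x)) UNIV"
  proof
    fix x assume "x \<in> ball a r"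
    then have "((\<lambda>m. b * (c m * mon m (x - a))) has_sum (b * f x)) UNIV"
      using 1 by (intro has_sum_cmult_right) auto
    then show "((\<lambda>m. (b * c m) * mon m (x - a)) has_sum (b * f x)) UNIV" by (simp add: mult.assoc)
  qed
  then show ?thesis unfolding loc_def
    apply (intro exI[of _ r] conjI[OF 1(1)])
    apply (rule exI[of _ "\<lambda>m. b * c m"])
    by simp
qed

lemma kfun_loc:
  assumes "\<forall>(b,u)\<in>set cs. det (mat 1 - a ** transpose u) > 0"
  shows "loc (kfun \<alpha> cs) a"
  using assms
proof (induction cs)
  case Nil then show ?case by (simp add: kfun_def loc_zero)
next
  case (Cons e cs)
  obtain b u where e: "e = (b,u)" by force
  have "loc (\<lambda>x. Kker \<alpha> x u) a"
    using powr_series[OF polyfun_det[of u], of a \<alpha>] Cons.prems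
    unfolding loc_def Kker_def by (simp add: e)
  then have "loc (\<lambda>x. b * Kker \<alpha> x u + kfun \<alpha> cs x) a"
    using Cons by (intro loc_add loc_cmult) auto
  moreover have "kfun \<alpha> (e # cs) = (\<lambda>x. b * Kker \<alpha> x u + kfun \<alpha> cs x)"
    by (auto simp: kfun_def e)
  ultimately show ?case by simp
qed

lemma ksq_self: "ksq \<alpha> (kdiff cs cs) = 0"
proof -
  have neg: "(\<Sum>(b,w)\<leftarrow>map (\<lambda>(a,u). (- a, u)) cs. a * b * Kker \<alpha> w u)
     = - (\<Sum>(b,w)\<leftarrow>cs. a * b * Kker \<alpha> w u)" for a u
    by (induction cs) auto
  have inner: "(\<Sum>(b,w)\<leftarrow>kdiff cs cs. a * b * Kker \<alpha> w u) = 0" for a u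
    unfolding kdiff_def using neg[of a u] by simp
  have z: "(\<Sum>(a,u)\<leftarrow>xs. (0::real)) = 0" for xs :: "(real \<times> (real^'q^'p)) list"
    by (induction xs) auto
  show ?thesis unfolding ksq_def by (simp add: inner z)
qed

theorem lemma3p1:
  fixes \<alpha> :: real
  assumes pq: "CARD('p::finite) < CARD('q::finite)"
    and alpha: "(\<exists>k::nat. k < CARD('p) \<and> \<alpha> = real k) \<or> \<alpha> > real CARD('p) - 1"
  shows "\<forall>f :: real^'q^'p \<Rightarrow> real. inH \<alpha> f \<longrightarrow>
           (\<forall>e>0. \<exists>h :: real^'q^'p \<Rightarrow> real.
              inH \<alpha> h \<and>
              (\<exists>U. open U \<and> (mcball :: (real^'q^'p) set) \<subseteq> U \<and> real_analytic_on h U) \<and>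
              (\<exists>S T. represents \<alpha> S f \<and> represents \<alpha> T h \<and>
                     (\<forall>\<^sub>F n in sequentially. ksq \<alpha> (kdiff (S n) (T n)) < e\<^sup>2)))"
proof (intro allI impI)
  fix f :: "real^'q^'p \<Rightarrow> real" and e :: real
  assume "inH \<alpha> f" and e: "e > 0"
  then obtain S where S: "represents \<alpha> S f" unfolding inH_def by blast
  have e2: "e\<^sup>2 > 0" using e by simp
  obtain N where N: "\<forall>m\<ge>N. \<forall>n\<ge>N. ksq \<alpha> (kdiff (S m) (S n)) < e\<^sup>2"
    using S e2 unfolding represents_def by blast
  have cent: "\<forall>(a,u)\<in>set (S N). u \<in> mball" using S unfolding represents_def by blast
  define h where "h = kfun \<alpha> (S N)"
  define T where "T = (\<lambda>n::nat. S N)"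
  have T: "represents \<alpha> T h"
    unfolding represents_def T_def h_def using cent by (simp add: ksq_self)
  define U where "U = (\<Inter>e\<in>set (S N). {x::real^'q^'p. 0 < det (mat 1 - x ** transpose (snd e))})"
  have "open U" unfolding U_def
    by (intro open_INT finite_set ballI open_Collect_less continuous_on_const continuous_polyfun[OF polyfun_det])
  moreover have "(mcball :: (real^'q^'p) set) \<subseteq> U"
    using cent unfolding U_def mcball_def mball_def by (auto intro!: det_pos)
  moreover have "real_analytic_on h U"
    unfolding real_analytic_on_def
  proof
    fix a assume "a \<in> U"
    then have "loc h a" unfolding h_def U_def by (intro kfun_loc) auto
    then show "\<exists>r>0. \<exists>c :: ('p \<times> 'q \<Rightarrow> nat) \<Rightarrow> real.
        \<forall>x\<in>ball a r. ((\<lambda>m. c m * (\<Prod>ij\<in>UNIV. (x $ fst ij $ snd ij - a $ fst ij $ snd ij) ^ m ij))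
                        has_sum h x) UNIV"
      unfolding loc_def mon_def by simp
  qed
  moreover have "\<forall>\<^sub>F n in sequentially. ksq \<alpha> (kdiff (S n) (T n)) < e\<^sup>2"
    unfolding T_def eventually_sequentially using N by blast
  ultimately show "\<exists>h :: real^'q^'p \<Rightarrow> real.
              inH \<alpha> h \<and>
              (\<exists>U. open U \<and> (mcball :: (real^'q^'p) set) \<subseteq> U \<and> real_analytic_on h U) \<and>
              (\<exists>S T. represents \<alpha> S f \<and> represents \<alpha> T h \<and>
                     (\<forall>\<^sub>F n in sequentially. ksq \<alpha> (kdiff (S n) (T n)) < e\<^sup>2))"
    using S T unfolding inH_def by blast
qed


end
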